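(* Let $\mathbb{E}$ be a Euclidean space and let $\mathcal{X},\mathcal{Y}\subset\mathbb{E}$ be sets that are both $C^{(2)}$-manifolds around a point $z\in\mathcal{X}\cap\mathcal{Y}$. Suppose $z$ is an isolated point of $\mathcal{X}\cap\mathcal{Y}$ and that $\mathcal{X}$ and $\mathcal{Y}$ intersect transversally at $z$, i.e. $N_{\mathcal{X}}(z)\cap N_{\mathcal{Y}}(z)=\{0\}$. Then there exists an open neighborhood $W$ of $z$ such that, for every point $x\in\mathcal{X}\cap W$, the affine set $x+T_{\mathcal{X}}(x)$ intersects the set $\mathcal{Y}\cap W$ at a unique point $y(x)$, and moreover $$|y(x)-z| = O(|x-z|^2)\quad\text{as } x\to z \ (x\in\mathcal{X}).$$
   Context: A set $\mathcal{X}\subset\mathbb{E}$ is a $C^{(r)}$-manifold around $z\in\mathcal{X}$ if there is a $C^{(r)}$-smooth map $F\colon\mathbb{E}\to\mathbb{R}^m$ with surjective derivative $DF(z)$ such that $F^{-1}(0)$ is a neighborhood of $z$ in $\mathcal{X}$; equivalently there is an open neighborhood $U$ of $0$ in $\mathbb{R}^k$ and a $C^{(r)}$-smooth map $G\colon U\to\mathbb{E}$ with $G(0)=z$, everywhere injective derivative, and $G(U)$ a neighborhood of $z$ in $\mathcal{X}$. The tangent space is $T_{\mathcal{X}}(z)=\mathrm{Null}(DF(z))=\mathrm{Range}(DG(0))$ and the normal space is $N_{\mathcal{X}}(z)=\mathrm{Range}(DF(z)^* )=\mathrm{Null}(DG(0)^* )$, its orthogonal complement; the same definitions apply at points of $\mathcal{X}$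 near $z$. *)

theory Defs
  imports "HOL-Analysis.Analysis"
begin

definition C2_fun :: "('a::euclidean_space \<Rightarrow> real) \<Rightarrow> bool" where
  "C2_fun f \<longleftrightarrow> (\<exists>g H. (\<forall>x. (f has_derivative (\<lambda>v. g x \<bullet> v)) (at x)) \<and>
      (\<forall>x. (g has_derivative blinfun_apply (H x)) (at x)) \<and> continuous_on UNIV H)"

definition local_defining_map ::
    "'a::euclidean_space set \<Rightarrow> 'a \<Rightarrow> nat \<Rightarrow> (nat \<Rightarrow> 'a \<Rightarrow> real) \<Rightarrow> bool" where
  "local_defining_map X x m F \<longleftrightarrow>
     (\<forall>i<m. C2_fun (F i)) \<and>
     (\<forall>c::nat \<Rightarrow> real. \<exists>v. \<forall>i<m. frechet_derivative (F i) (at x) v = c i) \<and>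
     {y. \<forall>i<m. F i y = 0} \<subseteq> X \<and>
     (\<exists>U. open U \<and> x \<in> U \<and> X \<inter> U \<subseteq> {y. \<forall>i<m. F i y = 0})"

definition C2_manifold_around :: "'a::euclidean_space set \<Rightarrow> 'a \<Rightarrow> bool" where
  "C2_manifold_around X z \<longleftrightarrow> z \<in> X \<and> (\<exists>m F. local_defining_map X z m F)"

definition tangent_space :: "'a::euclidean_space set \<Rightarrow> 'a \<Rightarrow> 'a set" where
  "tangent_space X x =
     (let p = (SOME p. local_defining_map X x (fst p) (snd p)) in
       {v. \<forall>i<fst p. frechet_derivative (snd p i) (at x) v = 0})"

text \<open>Normal space N_X(x) = Range(DF(x)^*): w = DF(x)^* c iff w \<bullet> v = c \<bullet> DF(x) v for all v.\<close>
definition normal_space :: "'a::euclidean_space set \<Rightarrow> 'a \<Rightarrow> 'a set" where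
  "normal_space X x =
     (let p = (SOME p. local_defining_map X x (fst p) (snd p)) in
       {w. \<exists>c::nat \<Rightarrow> real. \<forall>v. w \<bullet> v = (\<Sum>i<fst p. c i * frechet_derivative (snd p i) (at x) v)})"

end

theory Submission
  imports Defs
begin

lemma C2_props:
  assumes "C2_fun f"
  shows "\<exists>g. (\<forall>x. (f has_derivative (\<lambda>v. g x \<bullet> v)) (at x)) \<and>
     (\<forall>z. \<exists>\<rho>>0. \<exists>K\<ge>0. \<forall>x\<in>cball z \<rho>. \<forall>y\<in>cball z \<rho>.
        \<bar>f y - f x - g x \<bullet> (y - x)\<bar> \<le> K * (norm (y - x))\<^sup>2 \<and> norm (g y - g x) \<le> K * norm (y - x))"
proof -
  obtain g H where d1: "\<And>x. (f has_derivative (\<lambda>v. g x \<bullet> v)) (at x)"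
    and d2: "\<And>x. (g has_derivative blinfun_apply (H x)) (at x)" and cH: "continuous_on UNIV H"
    using assms unfolding C2_fun_def by blast
  have "\<exists>\<rho>>0. \<exists>K\<ge>0. \<forall>x\<in>cball z \<rho>. \<forall>y\<in>cball z \<rho>.
        \<bar>f y - f x - g x \<bullet> (y - x)\<bar> \<le> K * (norm (y - x))\<^sup>2 \<and> norm (g y - g x) \<le> K * norm (y - x)" for z
  proof -
    have "isCont H z" using cH by (simp add: continuous_on_eq_continuous_at)
    then obtain \<rho> where \<rho>: "\<rho> > 0" "\<And>u. dist u z < \<rho> \<Longrightarrow> dist (H u) (H z) < 1"
      unfolding continuous_at_eps_delta by (meson zero_less_one)
    define B where "B = norm (H z) + 1"
    have B0: "B \<ge> 0" unfolding B_def by simp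
    have HB: "norm (H u) \<le> B" if "u \<in> cball z (\<rho>/2)" for u
    proof -
      have "dist u z < \<rho>" using that \<rho>(1) by (simp add: dist_commute)
      then have "dist (H u) (H z) < 1" by (rule \<rho>(2))
      then show ?thesis unfolding B_def dist_norm by (smt (verit) norm_triangle_ineq2)
    qed
    have lip: "norm (g y - g x) \<le> B * norm (y - x)" if "x \<in> cball z (\<rho>/2)" "y \<in> cball z (\<rho>/2)" for x y
    proof (rule differentiable_bound[where f' = "\<lambda>u. blinfun_apply (H u)"])
      show "convex (cball z (\<rho>/2))" by simp
      show "(g has_derivative blinfun_apply (H u)) (at u within cball z (\<rho>/2))" for u
        using d2 by (rule has_derivative_at_withinI)
      show "onorm (blinfun_apply (H u)) \<le> B" if "u \<in> cball z (\<rho>/2)" for u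
        using HB[OF that] by (simp add: norm_blinfun.rep_eq)
    qed (use that in auto)
    have tay: "\<bar>f y - f x - g x \<bullet> (y - x)\<bar> \<le> B * (norm (y - x))\<^sup>2"
      if x: "x \<in> cball z (\<rho>/2)" and y: "y \<in> cball z (\<rho>/2)" for x y
    proof -
      have seg: "closed_segment x y \<subseteq> cball z (\<rho>/2)"
        using x y by (simp add: closed_segment_subset)
      have "norm ((f y - g x \<bullet> y) - (f x - g x \<bullet> x)) \<le> (B * norm (y - x)) * norm (y - x)"
      proof (rule differentiable_bound[where f' = "\<lambda>u v. g u \<bullet> v - g x \<bullet> v" and S = "closed_segment x y"])
        show "convex (closed_segment x y)" by simp
        show "((\<lambda>u. f u - g x \<bullet> u) has_derivative (\<lambda>v. g u \<bullet> v - g x \<bullet> v)) (at u within closed_segment x y)" for u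
          by (rule has_derivative_at_withinI) (intro derivative_eq_intros, rule d1[of u], auto)
        show "onorm (\<lambda>v. g u \<bullet> v - g x \<bullet> v) \<le> B * norm (y - x)" if u: "u \<in> closed_segment x y" for u
        proof (rule onorm_le)
          fix v
          have "norm (g u \<bullet> v - g x \<bullet> v) = \<bar>(g u - g x) \<bullet> v\<bar>" by (simp add: inner_diff_left)
          also have "\<dots> \<le> norm (g u - g x) * norm v" by (rule Cauchy_Schwarz_ineq2)
          also have "\<dots> \<le> (B * norm (u - x)) * norm v"
            using lip[of x u] u seg x by (intro mult_right_mono) auto
          also have "\<dots> \<le> (B * norm (y - x)) * norm v"
            using segment_bound1[OF u] B0 by (intro mult_right_mono mult_left_mono) auto
          finally show "norm (g u \<bullet> v - g x \<bullet> v) \<le> B * norm (y - x) * norm v" .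
        qed
      qed auto
      then show ?thesis by (simp add: power2_eq_square inner_diff_right algebra_simps)
    qed
    show ?thesis using \<rho>(1) B0 tay lip by (intro exI[of _ "\<rho>/2"] conjI exI[of _ B]) auto
  qed
  then show ?thesis using d1 by blast
qed

lemma unif_const:
  fixes Q :: "nat \<Rightarrow> real \<Rightarrow> real \<Rightarrow> bool"
  assumes "\<forall>i<m. \<exists>\<rho>>0. \<exists>K\<ge>0. Q i \<rho> K"
    and mono: "\<And>i \<rho> K \<rho>' K'. Q i \<rho> K \<Longrightarrow> 0 < \<rho>' \<Longrightarrow> \<rho>' \<le> \<rho> \<Longrightarrow> K \<le> K' \<Longrightarrow> Q i \<rho>' K'"
  shows "\<exists>\<rho>>0. \<exists>K\<ge>0. \<forall>i<m. Q i \<rho> K"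
  using assms(1)
proof (induction m)
  case 0 then show ?case by (auto intro: exI[of _ 1])
next
  case (Suc m)
  then obtain \<rho> K where a: "\<rho>>0" "K\<ge>0" "\<forall>i<m. Q i \<rho> K" by auto
  moreover obtain \<rho>1 K1 where b: "\<rho>1>0" "K1 \<ge> 0" "Q m \<rho>1 K1" using Suc.prems by auto
  have "\<forall>i<Suc m. Q i (min \<rho> \<rho>1) (max K K1)"
  proof (intro allI impI)
    fix i assume "i < Suc m"
    then consider "i < m" | "i = m" by linarith
    then show "Q i (min \<rho> \<rho>1) (max K K1)"
    proof cases
      case 1 then show ?thesis using a b mono[of i \<rho> K] by (simp)
    next
      case 2 then show ?thesis using b mono[of i \<rho>1 K1] a by simp
    qed
  qed
  then show ?case using a b
    by (intro exI[of _ "min \<rho> \<rho>1"] conjI exI[of _ "max K K1"]) auto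
qed

lemma C2_family:
  fixes F :: "nat \<Rightarrow> 'a::euclidean_space \<Rightarrow> real"
  assumes "\<forall>i<m. C2_fun (F i)"
  shows "\<exists>gF. (\<forall>i<m. \<forall>x. (F i has_derivative (\<lambda>v. gF i x \<bullet> v)) (at x)) \<and>
     (\<forall>z. \<exists>\<rho>>0. \<exists>K\<ge>0. \<forall>i<m. \<forall>x\<in>cball z \<rho>. \<forall>y\<in>cball z \<rho>.
        \<bar>F i y - F i x - gF i x \<bullet> (y - x)\<bar> \<le> K * (norm (y - x))\<^sup>2 \<and> norm (gF i y - gF i x) \<le> K * norm (y - x))"
proof -
  have "\<forall>i. \<exists>g. i < m \<longrightarrow> ((\<forall>x. (F i has_derivative (\<lambda>v. g x \<bullet> v)) (at x)) \<and>
     (\<forall>z. \<exists>\<rho>>0. \<exists>K\<ge>0. \<forall>x\<in>cball z \<rho>. \<forall>y\<in>cball z \<rho>.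
        \<bar>F i y - F i x - g x \<bullet> (y - x)\<bar> \<le> K * (norm (y - x))\<^sup>2 \<and> norm (g y - g x) \<le> K * norm (y - x)))"
    using assms C2_props by blast
  then obtain gF where gF: "\<And>i. i < m \<Longrightarrow> ((\<forall>x. (F i has_derivative (\<lambda>v. gF i x \<bullet> v)) (at x)) \<and>
     (\<forall>z. \<exists>\<rho>>0. \<exists>K\<ge>0. \<forall>x\<in>cball z \<rho>. \<forall>y\<in>cball z \<rho>.
        \<bar>F i y - F i x - gF i x \<bullet> (y - x)\<bar> \<le> K * (norm (y - x))\<^sup>2 \<and> norm (gF i y - gF i x) \<le> K * norm (y - x)))"
    by metis
  have "\<exists>\<rho>>0. \<exists>K\<ge>0. \<forall>i<m. \<forall>x\<in>cball z \<rho>. \<forall>y\<in>cball z \<rho>.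
        \<bar>F i y - F i x - gF i x \<bullet> (y - x)\<bar> \<le> K * (norm (y - x))\<^sup>2 \<and> norm (gF i y - gF i x) \<le> K * norm (y - x)" for z
  proof (rule unif_const[where Q = "\<lambda>i \<rho> K. \<forall>x\<in>cball z \<rho>. \<forall>y\<in>cball z \<rho>.
        \<bar>F i y - F i x - gF i x \<bullet> (y - x)\<bar> \<le> K * (norm (y - x))\<^sup>2 \<and> norm (gF i y - gF i x) \<le> K * norm (y - x)"])
    show "\<forall>i<m. \<exists>\<rho>>0. \<exists>K\<ge>0. \<forall>x\<in>cball z \<rho>. \<forall>y\<in>cball z \<rho>.
        \<bar>F i y - F i x - gF i x \<bullet> (y - x)\<bar> \<le> K * (norm (y - x))\<^sup>2 \<and> norm (gF i y - gF i x) \<le> K * norm (y - x)"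
      using gF by blast
  next
    fix i \<rho> K \<rho>' K'
    assume h: "\<forall>x\<in>cball z \<rho>. \<forall>y\<in>cball z \<rho>.
        \<bar>F i y - F i x - gF i x \<bullet> (y - x)\<bar> \<le> K * (norm (y - x))\<^sup>2 \<and> norm (gF i y - gF i x) \<le> K * norm (y - x)"
      and "0 < \<rho>'" "\<rho>' \<le> \<rho>" "K \<le> K'"
    show "\<forall>x\<in>cball z \<rho>'. \<forall>y\<in>cball z \<rho>'.
        \<bar>F i y - F i x - gF i x \<bullet> (y - x)\<bar> \<le> K' * (norm (y - x))\<^sup>2 \<and> norm (gF i y - gF i x) \<le> K' * norm (y - x)"
    proof (intro ballI conjI)
      fix x y assume "x \<in> cball z \<rho>'" "y \<in> cball z \<rho>'"
      then have xy: "x \<in> cball z \<rho>" "y \<in> cball z \<rho>" using \<open>\<rho>' \<le> \<rho>\<close> by auto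
      have "K * (norm (y - x))\<^sup>2 \<le> K' * (norm (y - x))\<^sup>2" "K * norm (y - x) \<le> K' * norm (y - x)"
        using \<open>K \<le> K'\<close> by (auto intro: mult_right_mono)
      then show "\<bar>F i y - F i x - gF i x \<bullet> (y - x)\<bar> \<le> K' * (norm (y - x))\<^sup>2"
         "norm (gF i y - gF i x) \<le> K' * norm (y - x)" using h xy by (meson order_trans)+
    qed
  qed
  then show ?thesis using gF by blast
qed

lemma surj_indep:
  fixes a :: "nat \<Rightarrow> 'a::euclidean_space"
  assumes "\<forall>c::nat\<Rightarrow>real. \<exists>v. \<forall>i<m. a i \<bullet> v = c i"
    and "(\<Sum>i<m. c i *\<^sub>R a i) = 0" and "i < m"
  shows "c i = 0"
proof -
  obtain v where v: "\<forall>i<m. a i \<bullet> v = c i" using assms(1) by blast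
  have "0 = (\<Sum>i<m. c i *\<^sub>R a i) \<bullet> v" using assms(2) by simp
  also have "\<dots> = (\<Sum>i<m. c i * (a i \<bullet> v))" by (simp add: inner_sum_left)
  also have "\<dots> = (\<Sum>i<m. c i * c i)" by (rule sum.cong) (auto simp: v)
  finally have "(\<Sum>i<m. c i * c i) = 0" by simp
  then have "\<forall>i\<in>{..<m}. c i * c i = 0"
    using sum_nonneg_eq_0_iff[of "{..<m}" "\<lambda>i. c i * c i"] by simp
  then show ?thesis using assms(3) by simp
qed

lemma proj_exists:
  fixes S :: "'a::euclidean_space set"
  assumes "subspace S"
  shows "\<exists>P. linear P \<and> (\<forall>h. P h \<in> S) \<and> (\<forall>h\<in>S. P h = h) \<and> (\<forall>h. \<forall>s\<in>S. (h - P h) \<bullet> s = 0)"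
proof -
  obtain B where B: "B \<subseteq> S" "pairwise orthogonal B" "\<And>x. x \<in> B \<Longrightarrow> norm x = 1"
    "independent B" "span B = S"
    using orthonormal_basis_subspace[OF assms] by metis
  have fin: "finite B" using B(4) independent_imp_finite by blast
  define P where "P h = (\<Sum>u\<in>B. (u \<bullet> h) *\<^sub>R u)" for h
  have lin: "linear P"
    by (rule linearI) (simp_all add: P_def inner_add_right scaleR_add_left sum.distrib scaleR_sum_right)
  have inS: "P h \<in> S" for h
  proof -
    have "P h \<in> span B" unfolding P_def by (intro span_sum span_scale span_base)
    then show ?thesis using B(5) by simp
  qed
  have orthB: "(h - P h) \<bullet> u = 0" if u: "u \<in> B" for h u
  proof -
    have "P h \<bullet> u = (\<Sum>u'\<in>B. (u' \<bullet> h) * (u' \<bullet> u))" by (simp add: P_def inner_sum_left)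
    also have "\<dots> = (u \<bullet> h) * (u \<bullet> u)"
    proof (rule sum.remove[OF fin u, THEN trans])
      have "(\<Sum>u'\<in>B - {u}. (u' \<bullet> h) * (u' \<bullet> u)) = 0"
        using B(2) u unfolding pairwise_def orthogonal_def by (intro sum.neutral) auto
      then show "(u \<bullet> h) * (u \<bullet> u) + (\<Sum>u'\<in>B - {u}. (u' \<bullet> h) * (u' \<bullet> u)) = (u \<bullet> h) * (u \<bullet> u)" by simp
    qed
    also have "\<dots> = u \<bullet> h" using B(3)[OF u] by (simp add: inner_commute power2_norm_eq_inner[symmetric])
    finally have "P h \<bullet> u = u \<bullet> h" .
    then show ?thesis using inner_diff_left[of h "P h" u] inner_commute[of h u] by linarith
  qed
  have orth: "(h - P h) \<bullet> s = 0" if "s \<in> S" for h s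
  proof -
    have "orthogonal (h - P h) s"
      by (rule orthogonal_to_span[where S = B]) (use that B(5) orthB in \<open>auto simp: orthogonal_def\<close>)
    then show ?thesis by (simp add: orthogonal_def)
  qed
  have id: "P h = h" if "h \<in> S" for h
  proof -
    have "h - P h \<in> S" using that inS assms by (simp add: subspace_diff)
    then have "(h - P h) \<bullet> (h - P h) = 0" using orth by blast
    then show ?thesis by simp
  qed
  show ?thesis using lin inS id orth by blast
qed

lemma lin_inv:
  fixes L :: "'a::euclidean_space \<Rightarrow> 'a"
  assumes "linear L" "\<And>h. L h = 0 \<Longrightarrow> h = 0"
  shows "\<exists>Li M. linear Li \<and> (\<forall>h. Li (L h) = h) \<and> (\<forall>w. L (Li w) = w) \<and> M > 0 \<and> (\<forall>w. norm (Li w) \<le> M * norm w)"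
proof -
  have "inj L" using assms linear_inj_iff_eq_0 by blast
  then obtain Li where Li: "linear Li" "\<forall>x. Li (L x) = x" "\<forall>x. L (Li x) = x"
    using linear_injective_isomorphism[OF assms(1)] by blast
  have "bounded_linear Li" using Li(1) linear_conv_bounded_linear by blast
  then obtain M where "M > 0" "\<forall>x. norm (Li x) \<le> norm x * M"
    using bounded_linear.pos_bounded by blast
  then show ?thesis using Li by (intro exI[of _ Li] exI[of _ M]) (auto simp: mult.commute)
qed

lemma brouwer_solve:
  fixes \<Psi> L Li :: "'a::euclidean_space \<Rightarrow> 'a"
  assumes Li: "linear Li" "\<forall>w. L (Li w) = w" "\<forall>h. Li (L h) = h" and L: "linear L"
   and M: "\<forall>w. norm (Li w) \<le> M * norm w"
   and cont: "continuous_on (cball c r) \<Psi>" and r: "r \<ge> 0"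
   and bd: "\<forall>y\<in>cball c r. M * norm (L (y - c) - \<Psi> y) \<le> r"
  shows "\<exists>y\<in>cball c r. \<Psi> y = 0"
proof -
  define f where "f y = y - Li (\<Psi> y)" for y
  have cLi: "continuous_on UNIV Li"
    using Li(1) linear_conv_bounded_linear linear_continuous_on by blast
  have cf: "continuous_on (cball c r) f"
    unfolding f_def
    by (intro continuous_on_diff continuous_on_id continuous_on_compose2[OF cLi cont]) auto
  have "f y \<in> cball c r" if "y \<in> cball c r" for y
  proof -
    have "f y - c = Li (L (y - c)) - Li (\<Psi> y)" using Li(3) by (simp add: f_def)
    also have "\<dots> = Li (L (y - c) - \<Psi> y)" using Li(1) by (simp add: linear_diff)
    finally have "norm (f y - c) \<le> M * norm (L (y - c) - \<Psi> y)" using M by simp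
    moreover have "M * norm (L (y - c) - \<Psi> y) \<le> r" using bd that by blast
    moreover have "dist c (f y) = norm (f y - c)" by (simp add: dist_norm norm_minus_commute)
    ultimately show ?thesis by simp
  qed
  then obtain y where y: "y \<in> cball c r" "f y = y"
    using brouwer[of "cball c r" f] cf r by auto
  then have "Li (\<Psi> y) = 0" by (simp add: f_def)
  then have "\<Psi> y = L 0" using Li(2) by metis
  then show ?thesis using y L linear_0 by metis
qed

lemma lyusternik:
  fixes F G :: "nat \<Rightarrow> 'a::euclidean_space \<Rightarrow> real" and a b :: "nat \<Rightarrow> 'a"
  assumes contF: "\<forall>i<m. continuous_on UNIV (F i)" and contG: "\<forall>j<k. continuous_on UNIV (G j)"
    and \<rho>: "\<rho> > 0" and K: "K \<ge> 0"
    and tF: "\<forall>i<m. \<forall>y\<in>cball x \<rho>. \<bar>F i y - F i x - a i \<bullet> (y - x)\<bar> \<le> K * (norm (y - x))\<^sup>2"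
    and tG: "\<forall>j<k. \<forall>y\<in>cball x \<rho>. \<bar>G j y - G j x - b j \<bullet> (y - x)\<bar> \<le> K * (norm (y - x))\<^sup>2"
    and zF: "\<forall>i<m. F i x = 0" and zG: "\<forall>j<k. G j x = 0"
    and ind: "\<forall>c d. (\<Sum>i<m. c i *\<^sub>R a i) + (\<Sum>j<k. d j *\<^sub>R b j) = 0 \<longrightarrow> (\<forall>i<m. c i = 0) \<and> (\<forall>j<k. d j = 0)"
    and va: "\<forall>i<m. a i \<bullet> v = 0" and vb: "\<forall>j<k. b j \<bullet> v = 0"
    and \<epsilon>: "\<epsilon> > 0"
  shows "\<exists>t y. 0 < t \<and> t \<le> \<epsilon> \<and> (\<forall>i<m. F i y = 0) \<and> (\<forall>j<k. G j y = 0) \<and> norm (y - x - t *\<^sub>R v) \<le> \<epsilon> * t"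
proof -
  define S where "S = {h. (\<forall>i<m. a i \<bullet> h = 0) \<and> (\<forall>j<k. b j \<bullet> h = 0)}"
  have "subspace S" unfolding S_def subspace_def by (simp add: inner_add_right)
  then obtain P where P: "linear P" "\<forall>h. P h \<in> S" "\<forall>h\<in>S. P h = h" "\<forall>h. \<forall>s\<in>S. (h - P h) \<bullet> s = 0"
    using proj_exists by blast
  define L where "L h = (\<Sum>i<m. (a i \<bullet> h) *\<^sub>R a i) + (\<Sum>j<k. (b j \<bullet> h) *\<^sub>R b j) + P h" for h
  have linL: "linear L"
    by (rule linearI) (simp_all add: L_def inner_add_right scaleR_add_left sum.distrib
        scaleR_sum_right linear_add[OF P(1)] linear_scale[OF P(1)] algebra_simps)
  have PP: "h \<bullet> P h = P h \<bullet> P h" for h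
  proof -
    have "(h - P h) \<bullet> P h = 0" using P(2,4) by blast
    then show ?thesis by (simp add: inner_diff_left)
  qed
  have L0: "h = 0" if "L h = 0" for h
  proof -
    have "h \<bullet> L h = (\<Sum>i<m. (a i \<bullet> h)\<^sup>2) + (\<Sum>j<k. (b j \<bullet> h)\<^sup>2) + P h \<bullet> P h"
      by (simp add: L_def inner_add_right inner_sum_right PP power2_eq_square inner_commute)
    then have e: "(\<Sum>i<m. (a i \<bullet> h)\<^sup>2) + (\<Sum>j<k. (b j \<bullet> h)\<^sup>2) + P h \<bullet> P h = 0" using that by simp
    have n1: "(\<Sum>i<m. (a i \<bullet> h)\<^sup>2) \<ge> 0" "(\<Sum>j<k. (b j \<bullet> h)\<^sup>2) \<ge> 0" "P h \<bullet> P h \<ge> 0"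
      by (auto intro: sum_nonneg)
    then have s0: "(\<Sum>i<m. (a i \<bullet> h)\<^sup>2) = 0" "(\<Sum>j<k. (b j \<bullet> h)\<^sup>2) = 0" using e by linarith+
    then have "\<forall>i\<in>{..<m}. (a i \<bullet> h)\<^sup>2 = 0" "\<forall>j\<in>{..<k}. (b j \<bullet> h)\<^sup>2 = 0"
      using sum_nonneg_eq_0_iff[of "{..<m}" "\<lambda>i. (a i \<bullet> h)\<^sup>2"]
        sum_nonneg_eq_0_iff[of "{..<k}" "\<lambda>j. (b j \<bullet> h)\<^sup>2"] by auto
    then have "h \<in> S" unfolding S_def by auto
    then have "P h = h" using P(3) by blast
    then have "h \<bullet> h = 0" using e s0 by simp
    then show ?thesis by simp
  qed
  obtain Li M where Li: "linear Li" "\<forall>h. Li (L h) = h" "\<forall>w. L (Li w) = w" "M > 0"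
    "\<forall>w. norm (Li w) \<le> M * norm w"
    using lin_inv[OF linL L0] by blast
  define A where "A = (\<Sum>i<m. norm (a i)) + (\<Sum>j<k. norm (b j))"
  have A0: "A \<ge> 0" unfolding A_def by (intro add_nonneg_nonneg sum_nonneg) auto
  define V where "V = norm v + \<epsilon>"
  have V0: "V > 0" using \<epsilon> by (simp add: V_def add_nonneg_pos)
  define X where "X = M * K * A * V\<^sup>2"
  have X0: "X \<ge> 0" unfolding X_def using Li(4) K A0 by simp
  define t where "t = min \<epsilon> (min (\<rho> / V) (\<epsilon> / (X + 1)))"
  have t0: "t > 0" unfolding t_def using \<epsilon> \<rho> V0 X0 by simp
  have t1: "t \<le> \<epsilon>" "t * V \<le> \<rho>" "t * (X + 1) \<le> \<epsilon>"
  proof -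
    have "t \<le> \<rho> / V" "t \<le> \<epsilon> / (X + 1)" unfolding t_def by auto
    then show "t \<le> \<epsilon>" "t * V \<le> \<rho>" "t * (X + 1) \<le> \<epsilon>"
      using V0 X0 by (auto simp: t_def pos_le_divide_eq)
  qed
  define c where "c = x + t *\<^sub>R v"
  define r where "r = \<epsilon> * t"
  define \<Psi> where "\<Psi> y = (\<Sum>i<m. F i y *\<^sub>R a i) + (\<Sum>j<k. G j y *\<^sub>R b j) + P (y - c)" for y
  have cP: "continuous_on UNIV P" using P(1) linear_conv_bounded_linear linear_continuous_on by blast
  have cont: "continuous_on (cball c r) \<Psi>"
    unfolding \<Psi>_def
    by (intro continuous_on_add continuous_on_sum continuous_on_scaleR continuous_on_const
        continuous_on_compose2[OF cP] continuous_on_diff continuous_on_id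
        continuous_on_subset[OF contF[rule_format] subset_UNIV]
        continuous_on_subset[OF contG[rule_format] subset_UNIV]) auto
  have bd: "\<forall>y\<in>cball c r. M * norm (L (y - c) - \<Psi> y) \<le> r"
  proof
    fix y assume y: "y \<in> cball c r"
    have "norm (y - x) \<le> norm (y - c) + norm (t *\<^sub>R v)"
      unfolding c_def by (metis diff_diff_eq norm_triangle_sub add.commute)
    also have "norm (y - c) \<le> r" using y by (simp add: dist_norm norm_minus_commute)
    finally have nyx: "norm (y - x) \<le> t * V"
      unfolding r_def V_def using t0 by (simp add: algebra_simps)
    then have yb: "y \<in> cball x \<rho>" using t1 by (simp add: dist_norm norm_minus_commute)
    have sq: "K * (norm (y - x))\<^sup>2 \<le> K * (t * V)\<^sup>2"
      using nyx K by (intro mult_left_mono power_mono) auto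
    have "L (y - c) - \<Psi> y = (\<Sum>i<m. (a i \<bullet> (y - c) - F i y) *\<^sub>R a i) + (\<Sum>j<k. (b j \<bullet> (y - c) - G j y) *\<^sub>R b j)"
      by (simp add: L_def \<Psi>_def scaleR_diff_left sum_subtractf sum.distrib algebra_simps)
    also have "\<dots> = (\<Sum>i<m. (a i \<bullet> (y - x) - F i y) *\<^sub>R a i) + (\<Sum>j<k. (b j \<bullet> (y - x) - G j y) *\<^sub>R b j)"
      using va vb by (simp add: c_def inner_diff_right inner_add_right)
    finally have eq: "L (y - c) - \<Psi> y = (\<Sum>i<m. (a i \<bullet> (y - x) - F i y) *\<^sub>R a i) + (\<Sum>j<k. (b j \<bullet> (y - x) - G j y) *\<^sub>R b j)" .
    have s1: "norm (\<Sum>i<m. (a i \<bullet> (y - x) - F i y) *\<^sub>R a i) \<le> (\<Sum>i<m. (K * (t * V)\<^sup>2) * norm (a i))"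
    proof (rule order_trans[OF norm_sum sum_mono])
      fix i assume "i \<in> {..<m}"
      then have "\<bar>a i \<bullet> (y - x) - F i y\<bar> \<le> K * (t * V)\<^sup>2"
        using tF zF yb sq by force
      then show "norm ((a i \<bullet> (y - x) - F i y) *\<^sub>R a i) \<le> K * (t * V)\<^sup>2 * norm (a i)"
        by (simp add: mult_right_mono)
    qed
    have s2: "norm (\<Sum>j<k. (b j \<bullet> (y - x) - G j y) *\<^sub>R b j) \<le> (\<Sum>j<k. (K * (t * V)\<^sup>2) * norm (b j))"
    proof (rule order_trans[OF norm_sum sum_mono])
      fix j assume "j \<in> {..<k}"
      then have "\<bar>b j \<bullet> (y - x) - G j y\<bar> \<le> K * (t * V)\<^sup>2"
        using tG zG yb sq by force
      then show "norm ((b j \<bullet> (y - x) - G j y) *\<^sub>R b j) \<le> K * (t * V)\<^sup>2 * norm (b j)"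
        by (simp add: mult_right_mono)
    qed
    have "norm (L (y - c) - \<Psi> y) \<le> (K * (t * V)\<^sup>2) * A"
      unfolding eq A_def using s1 s2 norm_triangle_le
      by (simp add: sum_distrib_left distrib_left) (smt (verit) norm_triangle_ineq)
    then have "M * norm (L (y - c) - \<Psi> y) \<le> M * ((K * (t * V)\<^sup>2) * A)"
      using Li(4) by (simp add: mult_left_mono)
    also have "\<dots> = t * (t * X)" by (simp add: X_def power2_eq_square)
    also have "\<dots> \<le> t * \<epsilon>"
    proof -
      have "t * X \<le> \<epsilon>" using t1(3) t0 by (simp add: distrib_left)
      then show ?thesis using t0 by (intro mult_left_mono) auto
    qed
    finally show "M * norm (L (y - c) - \<Psi> y) \<le> r" by (simp add: r_def mult.commute)
  qed
  obtain y where y: "y \<in> cball c r" "\<Psi> y = 0"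
    using brouwer_solve[OF Li(1) Li(3) Li(2) linL Li(5) cont _ bd] \<epsilon> t0 by (auto simp: r_def)
  define \<alpha> where "\<alpha> = (\<Sum>i<m. F i y *\<^sub>R a i) + (\<Sum>j<k. G j y *\<^sub>R b j)"
  define Q where "Q = P (y - c)"
  have QS: "Q \<in> S" using P(2) by (simp add: Q_def)
  have "\<alpha> \<bullet> Q = 0"
    using QS by (simp add: \<alpha>_def S_def inner_add_left inner_sum_left)
  moreover have "\<alpha> + Q = 0" using y(2) by (simp add: \<Psi>_def \<alpha>_def Q_def)
  ultimately have "Q \<bullet> Q = 0"
    by (metis add_eq_0_iff inner_minus_left neg_equal_0_iff_equal)
  then have "\<alpha> = 0" using \<open>\<alpha> + Q = 0\<close> by simp
  then have z: "(\<forall>i<m. F i y = 0) \<and> (\<forall>j<k. G j y = 0)" using ind[rule_format, of "\<lambda>i. F i y" "\<lambda>j. G j y"] unfolding \<alpha>_def by simp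
  have "norm (y - x - t *\<^sub>R v) \<le> \<epsilon> * t"
    using y(1) by (simp add: c_def r_def dist_norm norm_minus_commute diff_diff_eq)
  then show ?thesis using z t0 t1 by blast
qed

lemma null_sub:
  fixes F :: "nat \<Rightarrow> 'a::euclidean_space \<Rightarrow> real" and a :: "nat \<Rightarrow> 'a" and \<psi> :: "'a \<Rightarrow> real"
  assumes contF: "\<forall>i<m. continuous_on UNIV (F i)"
    and \<rho>: "\<rho> > 0" and K: "K \<ge> 0"
    and tF: "\<forall>i<m. \<forall>y\<in>cball x \<rho>. \<bar>F i y - F i x - a i \<bullet> (y - x)\<bar> \<le> K * (norm (y - x))\<^sup>2"
    and zF: "\<forall>i<m. F i x = 0"
    and indF: "\<forall>c. (\<Sum>i<m. c i *\<^sub>R a i) = 0 \<longrightarrow> (\<forall>i<m. c i = 0)"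
    and va: "\<forall>i<m. a i \<bullet> v = 0"
    and \<rho>': "\<rho>' > 0" and K': "K' \<ge> 0"
    and t\<psi>: "\<forall>y\<in>cball x \<rho>'. \<bar>\<psi> y - \<psi> x - w \<bullet> (y - x)\<bar> \<le> K' * (norm (y - x))\<^sup>2" and z\<psi>: "\<psi> x = 0"
    and \<delta>: "\<delta> > 0" and van: "\<forall>y. dist y x < \<delta> \<and> (\<forall>i<m. F i y = 0) \<longrightarrow> \<psi> y = 0"
  shows "w \<bullet> v = 0"
proof (rule ccontr)
  assume "w \<bullet> v \<noteq> 0"
  define \<alpha> where "\<alpha> = \<bar>w \<bullet> v\<bar>"
  have \<alpha>0: "\<alpha> > 0" using \<open>w \<bullet> v \<noteq> 0\<close> by (simp add: \<alpha>_def)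
  define nv where "nv = norm v + 1"
  have nv0: "nv \<ge> 1" by (simp add: nv_def)
  define D where "D = K' * nv\<^sup>2 + norm w + 1"
  have D0: "D \<ge> 1" unfolding D_def using K' by simp
  define \<epsilon> where "\<epsilon> = min 1 (min (\<delta> / (2 * nv)) (min (\<rho>' / nv) (\<alpha> / (2 * D))))"
  have \<epsilon>0: "\<epsilon> > 0" unfolding \<epsilon>_def using \<delta> \<rho>' \<alpha>0 nv0 D0 by simp
  have h: "\<epsilon> \<le> \<delta> / (2 * nv)" "\<epsilon> \<le> \<rho>' / nv" "\<epsilon> \<le> \<alpha> / (2 * D)" "\<epsilon> \<le> 1"
    unfolding \<epsilon>_def by (meson min.cobounded1 min.cobounded2 order_trans)+
  have nvp: "nv > 0" "2 * nv > 0" "2 * D > 0" using nv0 D0 by simp_all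
  have h1: "\<epsilon> * (2 * nv) \<le> \<delta>" using h(1) nvp(2) by (simp only: pos_le_divide_eq)
  have h2: "\<epsilon> * nv \<le> \<rho>'" using h(2) nvp(1) by (simp only: pos_le_divide_eq)
  have h3: "\<epsilon> * (2 * D) \<le> \<alpha>" using h(3) nvp(3) by (simp only: pos_le_divide_eq)
  have "\<epsilon> * nv > 0" using \<epsilon>0 nvp(1) by simp
  then have \<epsilon>b: "\<epsilon> \<le> 1" "\<epsilon> * nv < \<delta>" "\<epsilon> * nv \<le> \<rho>'" "\<epsilon> * D \<le> \<alpha> / 2"
    using h(4) h1 h2 h3 by (simp_all add: algebra_simps)
  have ind0: "\<forall>c d. (\<Sum>i<m. c i *\<^sub>R a i) + (\<Sum>j<(0::nat). d j *\<^sub>R (0::'a)) = 0 \<longrightarrow> (\<forall>i<m. c i = 0) \<and> (\<forall>j<(0::nat). d j = 0)"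
    using indF by simp
  have "\<exists>t y. 0 < t \<and> t \<le> \<epsilon> \<and> (\<forall>i<m. F i y = 0) \<and> (\<forall>j<(0::nat). (0::real) = 0) \<and> norm (y - x - t *\<^sub>R v) \<le> \<epsilon> * t"
    by (rule lyusternik[where G = "\<lambda>_ _. 0" and b = "\<lambda>_. 0", OF contF _ \<rho> K tF _ zF _ ind0 va _ \<epsilon>0]) simp_all
  then obtain t y where ty: "0 < t" "t \<le> \<epsilon>" "\<forall>i<m. F i y = 0" "norm (y - x - t *\<^sub>R v) \<le> \<epsilon> * t"
    by blast
  have "norm (y - x) \<le> norm (y - x - t *\<^sub>R v) + norm (t *\<^sub>R v)"
    using norm_triangle_sub[of "y - x" "t *\<^sub>R v"] by linarith
  also have "\<dots> \<le> \<epsilon> * t + t * norm v" using ty(1,4) by simp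
  also have "\<dots> \<le> t * nv" using \<epsilon>b(1) ty(1) by (simp add: nv_def algebra_simps mult_right_le_one_le)
  finally have nyx: "norm (y - x) \<le> t * nv" .
  have "t * nv \<le> \<epsilon> * nv" using ty(2) nv0 by simp
  then have nyx2: "norm (y - x) < \<delta>" "norm (y - x) \<le> \<rho>'" using nyx \<epsilon>b by linarith+
  have "\<psi> y = 0" using van nyx2(1) ty(3) by (simp add: dist_norm)
  moreover have "y \<in> cball x \<rho>'" using nyx2(2) by (simp add: dist_norm norm_minus_commute)
  ultimately have "\<bar>w \<bullet> (y - x)\<bar> \<le> K' * (norm (y - x))\<^sup>2"
    using t\<psi> z\<psi> by fastforce
  also have "\<dots> \<le> K' * (t * nv)\<^sup>2" using nyx K' by (intro mult_left_mono power_mono) auto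
  finally have e1: "\<bar>w \<bullet> (y - x)\<bar> \<le> K' * (t * nv)\<^sup>2" .
  have e2: "\<bar>w \<bullet> (y - x - t *\<^sub>R v)\<bar> \<le> norm w * (\<epsilon> * t)"
    using Cauchy_Schwarz_ineq2[of w "y - x - t *\<^sub>R v"] ty(4)
    by (meson mult_left_mono norm_ge_zero order_trans)
  have "t * \<alpha> = \<bar>w \<bullet> (y - x) - w \<bullet> (y - x - t *\<^sub>R v)\<bar>"
    using ty(1) by (simp add: \<alpha>_def inner_diff_right abs_mult)
  also have "\<dots> \<le> K' * (t * nv)\<^sup>2 + norm w * (\<epsilon> * t)" using e1 e2 by linarith
  also have "\<dots> = t * (K' * t * nv\<^sup>2 + norm w * \<epsilon>)" by (simp add: power2_eq_square algebra_simps)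
  finally have "\<alpha> \<le> K' * t * nv\<^sup>2 + norm w * \<epsilon>" using ty(1) by simp
  also have "K' * t * nv\<^sup>2 \<le> K' * \<epsilon> * nv\<^sup>2" using ty(2) K' by (intro mult_right_mono mult_left_mono) auto
  finally have "\<alpha> \<le> \<epsilon> * (D - 1)" by (simp add: D_def algebra_simps)
  then have "\<alpha> < \<epsilon> * D" using \<epsilon>0 by (simp add: algebra_simps)
  then show False using \<epsilon>b(4) \<alpha>0 by linarith
qed

lemma deriv_cont:
  assumes "\<forall>x. (f has_derivative f' x) (at x)"
  shows "continuous_on UNIV f"
  using assms has_derivative_continuous continuous_at_imp_continuous_on by blast

lemma ldm_null_sub:
  fixes F F' :: "nat \<Rightarrow> 'a::euclidean_space \<Rightarrow> real"
  assumes L1: "local_defining_map X x m F" and L2: "local_defining_map X x m' F'" and xX: "x \<in> X"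
  shows "{v. \<forall>i<m. frechet_derivative (F i) (at x) v = 0} \<subseteq> {v. \<forall>i<m'. frechet_derivative (F' i) (at x) v = 0}"
proof -
  obtain U1 where F1: "\<forall>i<m. C2_fun (F i)" "\<forall>c::nat \<Rightarrow> real. \<exists>v. \<forall>i<m. frechet_derivative (F i) (at x) v = c i"
     "{y. \<forall>i<m. F i y = 0} \<subseteq> X" "open U1" "x \<in> U1" "X \<inter> U1 \<subseteq> {y. \<forall>i<m. F i y = 0}"
    using L1 unfolding local_defining_map_def by blast
  obtain U2 where F2: "\<forall>i<m'. C2_fun (F' i)"
     "{y. \<forall>i<m'. F' i y = 0} \<subseteq> X" "open U2" "x \<in> U2" "X \<inter> U2 \<subseteq> {y. \<forall>i<m'. F' i y = 0}"
    using L2 unfolding local_defining_map_def by blast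
  obtain gF where gF: "\<forall>i<m. \<forall>x. (F i has_derivative (\<lambda>v. gF i x \<bullet> v)) (at x)"
    "\<forall>z. \<exists>\<rho>>0. \<exists>K\<ge>0. \<forall>i<m. \<forall>x\<in>cball z \<rho>. \<forall>y\<in>cball z \<rho>.
        \<bar>F i y - F i x - gF i x \<bullet> (y - x)\<bar> \<le> K * (norm (y - x))\<^sup>2 \<and> norm (gF i y - gF i x) \<le> K * norm (y - x)"
    using C2_family[OF F1(1)] by blast
  obtain gF' where gF': "\<forall>i<m'. \<forall>x. (F' i has_derivative (\<lambda>v. gF' i x \<bullet> v)) (at x)"
    "\<forall>z. \<exists>\<rho>>0. \<exists>K\<ge>0. \<forall>i<m'. \<forall>x\<in>cball z \<rho>. \<forall>y\<in>cball z \<rho>.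
        \<bar>F' i y - F' i x - gF' i x \<bullet> (y - x)\<bar> \<le> K * (norm (y - x))\<^sup>2 \<and> norm (gF' i y - gF' i x) \<le> K * norm (y - x)"
    using C2_family[OF F2(1)] by blast
  obtain \<rho> K where \<rho>K: "\<rho> > 0" "K \<ge> 0" "\<forall>i<m. \<forall>x0\<in>cball x \<rho>. \<forall>y\<in>cball x \<rho>.
        \<bar>F i y - F i x0 - gF i x0 \<bullet> (y - x0)\<bar> \<le> K * (norm (y - x0))\<^sup>2 \<and> norm (gF i y - gF i x0) \<le> K * norm (y - x0)"
    using gF(2) by blast
  obtain \<rho>' K' where \<rho>K': "\<rho>' > 0" "K' \<ge> 0" "\<forall>i<m'. \<forall>x0\<in>cball x \<rho>'. \<forall>y\<in>cball x \<rho>'.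
        \<bar>F' i y - F' i x0 - gF' i x0 \<bullet> (y - x0)\<bar> \<le> K' * (norm (y - x0))\<^sup>2 \<and> norm (gF' i y - gF' i x0) \<le> K' * norm (y - x0)"
    using gF'(2) by blast
  have fd: "frechet_derivative (F i) (at x) = (\<lambda>v. gF i x \<bullet> v)" if "i < m" for i
    using gF(1) that frechet_derivative_at by metis
  have fd': "frechet_derivative (F' i) (at x) = (\<lambda>v. gF' i x \<bullet> v)" if "i < m'" for i
    using gF'(1) that frechet_derivative_at by metis
  have surj: "\<forall>c::nat\<Rightarrow>real. \<exists>v. \<forall>i<m. gF i x \<bullet> v = c i" using F1(2) fd by simp
  have indF: "\<forall>c. (\<Sum>i<m. c i *\<^sub>R gF i x) = 0 \<longrightarrow> (\<forall>i<m. c i = 0)"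
    using surj_indep[OF surj] by blast
  have contF: "\<forall>i<m. continuous_on UNIV (F i)"
  proof (intro allI impI)
    fix i assume "i < m"
    then show "continuous_on UNIV (F i)"
      by (intro deriv_cont[of _ "\<lambda>x v. gF i x \<bullet> v"]) (use gF(1) in blast)
  qed
  have zF: "\<forall>i<m. F i x = 0" using F1(5,6) xX by blast
  have zF': "\<forall>i<m'. F' i x = 0" using F2(3,4,5) xX by blast
  obtain \<delta> where \<delta>: "\<delta> > 0" "ball x \<delta> \<subseteq> U2" using F2(3,4) open_contains_ball by blast
  have tF: "\<forall>i<m. \<forall>y\<in>cball x \<rho>. \<bar>F i y - F i x - gF i x \<bullet> (y - x)\<bar> \<le> K * (norm (y - x))\<^sup>2"
    using \<rho>K(1,3) by simp
  show ?thesis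
  proof
    fix v assume "v \<in> {v. \<forall>i<m. frechet_derivative (F i) (at x) v = 0}"
    then have va: "\<forall>i<m. gF i x \<bullet> v = 0" using fd by simp
    have "gF' j x \<bullet> v = 0" if j: "j < m'" for j
    proof (rule null_sub[OF contF \<rho>K(1,2) tF zF indF va \<rho>K'(1,2) _ _ \<delta>(1)])
      show "\<forall>y\<in>cball x \<rho>'. \<bar>F' j y - F' j x - gF' j x \<bullet> (y - x)\<bar> \<le> K' * (norm (y - x))\<^sup>2"
        using \<rho>K'(1,3) j by simp
      show "F' j x = 0" using zF' j by blast
      show "\<forall>y. dist y x < \<delta> \<and> (\<forall>i<m. F i y = 0) \<longrightarrow> F' j y = 0"
      proof (intro allI impI)
        fix y assume "dist y x < \<delta> \<and> (\<forall>i<m. F i y = 0)"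
        then have "y \<in> X" "y \<in> U2" using F1(3) \<delta>(2) by (auto simp: dist_commute)
        then show "F' j y = 0" using F2(5) j by blast
      qed
    qed
    then show "v \<in> {v. \<forall>i<m'. frechet_derivative (F' i) (at x) v = 0}" using fd' by simp
  qed
qed

lemma sum_norm_bound:
  fixes a :: "nat \<Rightarrow> 'a::real_normed_vector"
  assumes "\<And>i. i < m \<Longrightarrow> \<bar>c i\<bar> \<le> B"
  shows "norm (\<Sum>i<m. c i *\<^sub>R a i) \<le> B * (\<Sum>i<m. norm (a i))"
proof -
  have "norm (\<Sum>i<m. c i *\<^sub>R a i) \<le> (\<Sum>i<m. \<bar>c i\<bar> * norm (a i))"
    by (rule order_trans[OF norm_sum]) simp
  also have "\<dots> \<le> (\<Sum>i<m. B * norm (a i))"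
    by (rule sum_mono) (use assms in \<open>auto intro: mult_right_mono\<close>)
  also have "\<dots> = B * (\<Sum>i<m. norm (a i))" by (simp add: sum_distrib_left)
  finally show ?thesis .
qed

lemma surj_perturb:
  fixes a :: "nat \<Rightarrow> 'a::euclidean_space"
  assumes "\<forall>c::nat\<Rightarrow>real. \<exists>v. \<forall>i<m. a i \<bullet> v = c i"
  shows "\<exists>\<eta>>0. \<forall>a'. (\<forall>i<m. norm (a' i - a i) \<le> \<eta>) \<longrightarrow> (\<forall>c::nat\<Rightarrow>real. \<exists>v. \<forall>i<m. a' i \<bullet> v = c i)"
proof -
  have "\<forall>k. \<exists>u. \<forall>i<m. a i \<bullet> u = (if i = k then 1 else 0)"
  proof
    fix k
    show "\<exists>u. \<forall>i<m. a i \<bullet> u = (if i = k then 1 else 0)"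
      using spec[OF assms, of "\<lambda>i. if i = k then 1 else 0"] by simp
  qed
  then obtain u where u: "\<And>k i. i < m \<Longrightarrow> a i \<bullet> u k = (if i = k then 1 else 0)" by metis
  have dl: "(\<Sum>k<m. f k * (if j = k then 1 else 0)) = f j" if "j < m" for f :: "nat \<Rightarrow> real" and j
  proof -
    have "(\<Sum>k<m. f k * (if j = k then 1 else 0)) = (\<Sum>k<m. if j = k then f k else 0)"
      by (rule sum.cong) auto
    also have "\<dots> = f j" using that by (simp add: sum.delta)
    finally show ?thesis .
  qed
  define U where "U = (\<Sum>k<m. norm (u k)) + 1"
  have U1: "U \<ge> 1" unfolding U_def by (simp add: sum_nonneg)
  define \<eta> where "\<eta> = 1 / (2 * U)"
  have \<eta>0: "\<eta> > 0" using U1 by (simp add: \<eta>_def)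
  have "\<forall>c::nat\<Rightarrow>real. \<exists>v. \<forall>i<m. a' i \<bullet> v = c i" if a': "\<forall>i<m. norm (a' i - a i) \<le> \<eta>" for a'
  proof
    fix c :: "nat \<Rightarrow> real"
    define T where "T h = h + (\<Sum>k<m. ((a' k - a k) \<bullet> h) *\<^sub>R u k)" for h
    have linT: "linear T"
      by (rule linearI) (simp_all add: T_def inner_add_right scaleR_add_left sum.distrib scaleR_sum_right scaleR_add_right add_ac)
    have Tb: "norm (T h - h) \<le> norm h / 2" for h
    proof -
      have "T h - h = (\<Sum>k<m. ((a' k - a k) \<bullet> h) *\<^sub>R u k)" by (simp add: T_def)
      moreover have "\<bar>(a' k - a k) \<bullet> h\<bar> \<le> \<eta> * norm h" if "k < m" for k
      proof -
        have "\<bar>(a' k - a k) \<bullet> h\<bar> \<le> norm (a' k - a k) * norm h" by (rule Cauchy_Schwarz_ineq2)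
        also have "\<dots> \<le> \<eta> * norm h" using a' that by (intro mult_right_mono) auto
        finally show ?thesis .
      qed
      ultimately have "norm (T h - h) \<le> (\<eta> * norm h) * (\<Sum>k<m. norm (u k))"
        using sum_norm_bound[of m "\<lambda>k. (a' k - a k) \<bullet> h" "\<eta> * norm h" u] by simp
      also have "\<dots> \<le> (\<eta> * norm h) * U" using \<eta>0 by (intro mult_left_mono) (auto simp: U_def)
      also have "\<dots> = norm h / 2" using U1 by (simp add: \<eta>_def)
      finally show ?thesis .
    qed
    have T0: "h = 0" if "T h = 0" for h
      using Tb[of h] that by simp
    have "surj T"
      using linear_injective_imp_surjective[OF linT] linT T0 linear_inj_iff_eq_0 by blast
    then obtain h where h: "T h = (\<Sum>k<m. c k *\<^sub>R u k)" by (metis surjD)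
    have "a' j \<bullet> h = c j" if j: "j < m" for j
    proof -
      have "a j \<bullet> T h = a j \<bullet> h + (\<Sum>k<m. ((a' k - a k) \<bullet> h) * (if j = k then 1 else 0))"
        using j by (simp add: T_def inner_add_right inner_sum_right u)
      also have "\<dots> = a' j \<bullet> h" using dl[OF j] by (simp add: inner_diff_left)
      finally have 1: "a j \<bullet> T h = a' j \<bullet> h" .
      have "a j \<bullet> T h = (\<Sum>k<m. c k * (if j = k then 1 else 0))"
        using j by (simp add: h inner_sum_right u)
      also have "\<dots> = c j" using dl[OF j] .
      finally show ?thesis using 1 by simp
    qed
    then show "\<exists>v. \<forall>i<m. a' i \<bullet> v = c i" by blast
  qed
  then show ?thesis using \<eta>0 by blast
qed

lemma indep2:
  fixes a b :: "nat \<Rightarrow> 'a::euclidean_space"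
  assumes sa: "\<forall>c::nat\<Rightarrow>real. \<exists>v. \<forall>i<m. a i \<bullet> v = c i" and sb: "\<forall>c::nat\<Rightarrow>real. \<exists>v. \<forall>j<k. b j \<bullet> v = c j"
    and tr: "\<forall>c d. (\<Sum>i<m. c i *\<^sub>R a i) = (\<Sum>j<k. d j *\<^sub>R b j) \<longrightarrow> (\<Sum>i<m. c i *\<^sub>R a i) = 0"
  shows "\<forall>c d. (\<Sum>i<m. c i *\<^sub>R a i) + (\<Sum>j<k. d j *\<^sub>R b j) = 0 \<longrightarrow> (\<forall>i<m. c i = 0) \<and> (\<forall>j<k. d j = 0)"
proof (intro allI impI)
  fix c d assume h: "(\<Sum>i<m. c i *\<^sub>R a i) + (\<Sum>j<k. d j *\<^sub>R b j) = 0"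
  then have "(\<Sum>i<m. c i *\<^sub>R a i) = (\<Sum>j<k. (- d j) *\<^sub>R b j)"
    by (simp add: sum_negf eq_neg_iff_add_eq_0)
  then have 1: "(\<Sum>i<m. c i *\<^sub>R a i) = 0" using tr[rule_format, of c "\<lambda>j. - d j"] by simp
  then have 2: "(\<Sum>j<k. d j *\<^sub>R b j) = 0" using h by simp
  show "(\<forall>i<m. c i = 0) \<and> (\<forall>j<k. d j = 0)"
    using surj_indep[OF sa 1] surj_indep[OF sb 2] by blast
qed

lemma tangent_eq:
  fixes F :: "nat \<Rightarrow> 'a::euclidean_space \<Rightarrow> real"
  assumes "local_defining_map X x m F" "x \<in> X"
  shows "tangent_space X x = {v. \<forall>i<m. frechet_derivative (F i) (at x) v = 0}"
proof -
  define p where "p = (SOME p. local_defining_map X x (fst p) (snd p))"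
  have "local_defining_map X x (fst p) (snd p)"
    unfolding p_def by (rule someI[of _ "(m, F)"]) (simp add: assms)
  then have "{v. \<forall>i<fst p. frechet_derivative (snd p i) (at x) v = 0} = {v. \<forall>i<m. frechet_derivative (F i) (at x) v = 0}"
    using ldm_null_sub assms by (intro equalityI) blast+
  then show ?thesis by (simp add: tangent_space_def p_def Let_def)
qed

lemma normal_choice:
  assumes "C2_manifold_around X z"
  obtains m F where "local_defining_map X z m F"
    "normal_space X z = {w. \<exists>c::nat\<Rightarrow>real. \<forall>v. w \<bullet> v = (\<Sum>i<m. c i * frechet_derivative (F i) (at z) v)}"
proof -
  define p where "p = (SOME p. local_defining_map X z (fst p) (snd p))"
  have "\<exists>p. local_defining_map X z (fst p) (snd p)"
    using assms unfolding C2_manifold_around_def by auto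
  then have "local_defining_map X z (fst p) (snd p)" unfolding p_def by (rule someI_ex)
  moreover have "normal_space X z = {w. \<exists>c::nat\<Rightarrow>real. \<forall>v. w \<bullet> v = (\<Sum>i<fst p. c i * frechet_derivative (snd p i) (at z) v)}"
    by (simp add: normal_space_def p_def Let_def)
  ultimately show ?thesis using that by blast
qed

theorem theorem3p1:
  fixes X Y :: "'a::euclidean_space set" and z :: 'a
  assumes "z \<in> X \<inter> Y"
    and "C2_manifold_around X z" and "C2_manifold_around Y z"
    and "z isolated_in (X \<inter> Y)"
    and "normal_space X z \<inter> normal_space Y z = {0}"
  shows "\<exists>W. open W \<and> z \<in> W \<and>
           (\<forall>x\<in>X \<inter> W. \<exists>!y. y \<in> Y \<inter> W \<and> y \<in> {x + v | v. v \<in> tangent_space X x}) \<and>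
           (\<exists>C \<delta>. \<delta> > 0 \<and> (\<forall>x y. x \<in> X \<inter> W \<and> y \<in> Y \<inter> W \<and>
                 y \<in> {x + v | v. v \<in> tangent_space X x} \<and> norm (x - z) < \<delta> \<longrightarrow>
                 norm (y - z) \<le> C * (norm (x - z))\<^sup>2))"
proof -
  obtain m F where ldmX: "local_defining_map X z m F"
    and nX: "normal_space X z = {w. \<exists>c::nat\<Rightarrow>real. \<forall>v. w \<bullet> v = (\<Sum>i<m. c i * frechet_derivative (F i) (at z) v)}"
    using normal_choice[OF assms(2)] by blast
  obtain k G where ldmY: "local_defining_map Y z k G"
    and nY: "normal_space Y z = {w. \<exists>c::nat\<Rightarrow>real. \<forall>v. w \<bullet> v = (\<Sum>i<k. c i * frechet_derivative (G i) (at z) v)}"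
    using normal_choice[OF assms(3)] by blast
  obtain UF where F1: "\<forall>i<m. C2_fun (F i)" "\<forall>c::nat \<Rightarrow> real. \<exists>v. \<forall>i<m. frechet_derivative (F i) (at z) v = c i"
     "{y. \<forall>i<m. F i y = 0} \<subseteq> X" "open UF" "z \<in> UF" "X \<inter> UF \<subseteq> {y. \<forall>i<m. F i y = 0}"
    using ldmX unfolding local_defining_map_def by blast
  obtain UG where G1: "\<forall>i<k. C2_fun (G i)" "\<forall>c::nat \<Rightarrow> real. \<exists>v. \<forall>i<k. frechet_derivative (G i) (at z) v = c i"
     "{y. \<forall>i<k. G i y = 0} \<subseteq> Y" "open UG" "z \<in> UG" "Y \<inter> UG \<subseteq> {y. \<forall>i<k. G i y = 0}"
    using ldmY unfolding local_defining_map_def by blast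
  obtain gF where gF: "\<forall>i<m. \<forall>x. (F i has_derivative (\<lambda>v. gF i x \<bullet> v)) (at x)"
    "\<forall>z. \<exists>\<rho>>0. \<exists>K\<ge>0. \<forall>i<m. \<forall>x\<in>cball z \<rho>. \<forall>y\<in>cball z \<rho>.
        \<bar>F i y - F i x - gF i x \<bullet> (y - x)\<bar> \<le> K * (norm (y - x))\<^sup>2 \<and> norm (gF i y - gF i x) \<le> K * norm (y - x)"
    using C2_family[OF F1(1)] by blast
  obtain gG where gG: "\<forall>i<k. \<forall>x. (G i has_derivative (\<lambda>v. gG i x \<bullet> v)) (at x)"
    "\<forall>z. \<exists>\<rho>>0. \<exists>K\<ge>0. \<forall>i<k. \<forall>x\<in>cball z \<rho>. \<forall>y\<in>cball z \<rho>.
        \<bar>G i y - G i x - gG i x \<bullet> (y - x)\<bar> \<le> K * (norm (y - x))\<^sup>2 \<and> norm (gG i y - gG i x) \<le> K * norm (y - x)"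
    using C2_family[OF G1(1)] by blast
  obtain \<rho>F KF where \<rho>KF: "\<rho>F > 0" "KF \<ge> 0" "\<forall>i<m. \<forall>x\<in>cball z \<rho>F. \<forall>y\<in>cball z \<rho>F.
        \<bar>F i y - F i x - gF i x \<bullet> (y - x)\<bar> \<le> KF * (norm (y - x))\<^sup>2 \<and> norm (gF i y - gF i x) \<le> KF * norm (y - x)"
    using gF(2) by blast
  obtain \<rho>G KG where \<rho>KG: "\<rho>G > 0" "KG \<ge> 0" "\<forall>i<k. \<forall>x\<in>cball z \<rho>G. \<forall>y\<in>cball z \<rho>G.
        \<bar>G i y - G i x - gG i x \<bullet> (y - x)\<bar> \<le> KG * (norm (y - x))\<^sup>2 \<and> norm (gG i y - gG i x) \<le> KG * norm (y - x)"
    using gG(2) by blast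
  define a where "a i = gF i z" for i
  define b where "b j = gG j z" for j
  have fdF: "frechet_derivative (F i) (at x) = (\<lambda>v. gF i x \<bullet> v)" if "i < m" for i x
    using gF(1) that frechet_derivative_at by metis
  have fdG: "frechet_derivative (G i) (at x) = (\<lambda>v. gG i x \<bullet> v)" if "i < k" for i x
    using gG(1) that frechet_derivative_at by metis
  have surjA: "\<forall>c::nat\<Rightarrow>real. \<exists>v. \<forall>i<m. a i \<bullet> v = c i" using F1(2) fdF by (simp add: a_def)
  have surjB: "\<forall>c::nat\<Rightarrow>real. \<exists>v. \<forall>i<k. b i \<bullet> v = c i" using G1(2) fdG by (simp add: b_def)
  have nXa: "(\<Sum>i<m. c i *\<^sub>R a i) \<in> normal_space X z" for c
  proof -
    have "(\<Sum>i<m. c i *\<^sub>R a i) \<bullet> v = (\<Sum>i<m. c i * frechet_derivative (F i) (at z) v)" for v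
      by (simp add: inner_sum_left fdF a_def)
    then show ?thesis unfolding nX by blast
  qed
  have nYb: "(\<Sum>i<k. c i *\<^sub>R b i) \<in> normal_space Y z" for c
  proof -
    have "(\<Sum>i<k. c i *\<^sub>R b i) \<bullet> v = (\<Sum>i<k. c i * frechet_derivative (G i) (at z) v)" for v
      by (simp add: inner_sum_left fdG b_def)
    then show ?thesis unfolding nY by blast
  qed
  have tr: "\<forall>c d. (\<Sum>i<m. c i *\<^sub>R a i) = (\<Sum>j<k. d j *\<^sub>R b j) \<longrightarrow> (\<Sum>i<m. c i *\<^sub>R a i) = 0"
    using nXa nYb assms(5) by (metis IntI singletonD)
  have ind2: "\<forall>c d. (\<Sum>i<m. c i *\<^sub>R a i) + (\<Sum>j<k. d j *\<^sub>R b j) = 0 \<longrightarrow> (\<forall>i<m. c i = 0) \<and> (\<forall>j<k. d j = 0)"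
    by (rule indep2[OF surjA surjB tr])
  have contF: "\<forall>i<m. continuous_on UNIV (F i)"
  proof (intro allI impI)
    fix i assume "i < m"
    then show "continuous_on UNIV (F i)"
      by (intro deriv_cont[of _ "\<lambda>x v. gF i x \<bullet> v"]) (use gF(1) in blast)
  qed
  have contG: "\<forall>i<k. continuous_on UNIV (G i)"
  proof (intro allI impI)
    fix i assume "i < k"
    then show "continuous_on UNIV (G i)"
      by (intro deriv_cont[of _ "\<lambda>x v. gG i x \<bullet> v"]) (use gG(1) in blast)
  qed
  have zFz: "\<forall>i<m. F i z = 0" using F1(5,6) assms(1) by blast
  have zGz: "\<forall>i<k. G i z = 0" using G1(5,6) assms(1) by blast
  have noint: "v = 0" if va: "\<forall>i<m. a i \<bullet> v = 0" and vb: "\<forall>j<k. b j \<bullet> v = 0" for v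
  proof (rule ccontr)
    assume "v \<noteq> 0"
    obtain e where e: "e > 0" "\<forall>y\<in>X \<inter> Y. dist z y < e \<longrightarrow> y = z"
      using assms(4) isolated_in_dist_Ex_iff by blast
    define \<epsilon> where "\<epsilon> = min (min 1 (norm v / 2)) (e / (2 * (norm v + 1)))"
    have \<epsilon>0: "\<epsilon> > 0" using \<open>v \<noteq> 0\<close> e(1) by (simp add: \<epsilon>_def add_pos_nonneg)
    have \<epsilon>b: "\<epsilon> \<le> 1" "\<epsilon> < norm v" "\<epsilon> * (norm v + 1) < e"
    proof -
      have h: "\<epsilon> \<le> e / (2 * (norm v + 1))" "\<epsilon> \<le> norm v / 2" "\<epsilon> \<le> 1"
        unfolding \<epsilon>_def by (meson min.cobounded1 min.cobounded2 order_trans)+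
      show "\<epsilon> \<le> 1" using h by simp
      show "\<epsilon> < norm v" using h(2) \<epsilon>0 by linarith
      have "\<epsilon> * (norm v + 1) \<le> e / 2" using h(1)
        by (simp add: pos_le_divide_eq add_pos_nonneg algebra_simps)
      then show "\<epsilon> * (norm v + 1) < e" using e(1) by linarith
    qed
    define \<rho>0 where "\<rho>0 = min \<rho>F \<rho>G"
    define K0 where "K0 = max KF KG"
    have tF0: "\<forall>i<m. \<forall>y\<in>cball z \<rho>0. \<bar>F i y - F i z - a i \<bullet> (y - z)\<bar> \<le> K0 * (norm (y - z))\<^sup>2"
    proof (intro allI impI ballI)
      fix i y assume "i < m" "y \<in> cball z \<rho>0"
      then have "\<bar>F i y - F i z - a i \<bullet> (y - z)\<bar> \<le> KF * (norm (y - z))\<^sup>2"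
        using \<rho>KF \<open>i < m\<close> by (auto simp: \<rho>0_def a_def)
      also have "\<dots> \<le> K0 * (norm (y - z))\<^sup>2" by (intro mult_right_mono) (auto simp: K0_def)
      finally show "\<bar>F i y - F i z - a i \<bullet> (y - z)\<bar> \<le> K0 * (norm (y - z))\<^sup>2" .
    qed
    have tG0: "\<forall>i<k. \<forall>y\<in>cball z \<rho>0. \<bar>G i y - G i z - b i \<bullet> (y - z)\<bar> \<le> K0 * (norm (y - z))\<^sup>2"
    proof (intro allI impI ballI)
      fix i y assume "i < k" "y \<in> cball z \<rho>0"
      then have "\<bar>G i y - G i z - b i \<bullet> (y - z)\<bar> \<le> KG * (norm (y - z))\<^sup>2"
        using \<rho>KG \<open>i < k\<close> by (auto simp: \<rho>0_def b_def)
      also have "\<dots> \<le> K0 * (norm (y - z))\<^sup>2" by (intro mult_right_mono) (auto simp: K0_def)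
      finally show "\<bar>G i y - G i z - b i \<bullet> (y - z)\<bar> \<le> K0 * (norm (y - z))\<^sup>2" .
    qed
    have "\<rho>0 > 0" "K0 \<ge> 0" using \<rho>KF \<rho>KG by (auto simp: \<rho>0_def K0_def)
    then obtain t y where ty: "0 < t" "t \<le> \<epsilon>" "\<forall>i<m. F i y = 0" "\<forall>j<k. G j y = 0"
        "norm (y - z - t *\<^sub>R v) \<le> \<epsilon> * t"
      using lyusternik[OF contF contG _ _ tF0 tG0 zFz zGz ind2 va vb \<epsilon>0] by blast
    have yXY: "y \<in> X \<inter> Y" using ty(3,4) F1(3) G1(3) by blast
    have "y \<noteq> z"
    proof
      assume "y = z"
      then have "t * norm v \<le> \<epsilon> * t" using ty(5) ty(1) by simp
      then show False using \<epsilon>b(2) ty(1) by (simp add: mult.commute)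
    qed
    have "norm (y - z) \<le> norm (y - z - t *\<^sub>R v) + norm (t *\<^sub>R v)"
      using norm_triangle_sub[of "y - z" "t *\<^sub>R v"] by linarith
    also have "\<dots> \<le> \<epsilon> * t + t * norm v" using ty(1,5) by simp
    also have "\<dots> \<le> t * (norm v + 1)" using \<epsilon>b(1) ty(1) by (simp add: algebra_simps mult_right_le_one_le)
    also have "\<dots> \<le> \<epsilon> * (norm v + 1)" using ty(2) by (simp add: mult_right_mono)
    finally have "dist z y < e" using \<epsilon>b(3) by (simp add: dist_norm norm_minus_commute)
    then show False using e(2) yXY \<open>y \<noteq> z\<close> by blast
  qed
  define L where "L h = (\<Sum>i<m. (a i \<bullet> h) *\<^sub>R a i) + (\<Sum>j<k. (b j \<bullet> h) *\<^sub>R b j)" for h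
  have linL: "linear L"
    by (rule linearI) (simp_all add: L_def inner_add_right scaleR_add_left sum.distrib
        scaleR_sum_right algebra_simps)
  have L0: "h = 0" if "L h = 0" for h
  proof -
    have "h \<bullet> L h = (\<Sum>i<m. (a i \<bullet> h)\<^sup>2) + (\<Sum>j<k. (b j \<bullet> h)\<^sup>2)"
      by (simp add: L_def inner_add_right inner_sum_right power2_eq_square inner_commute)
    then have e: "(\<Sum>i<m. (a i \<bullet> h)\<^sup>2) + (\<Sum>j<k. (b j \<bullet> h)\<^sup>2) = 0" using that by simp
    have n1: "(\<Sum>i<m. (a i \<bullet> h)\<^sup>2) \<ge> 0" "(\<Sum>j<k. (b j \<bullet> h)\<^sup>2) \<ge> 0"
      by (auto intro: sum_nonneg)
    then have "(\<Sum>i<m. (a i \<bullet> h)\<^sup>2) = 0" "(\<Sum>j<k. (b j \<bullet> h)\<^sup>2) = 0" using e by linarith+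
    then have "\<forall>i\<in>{..<m}. (a i \<bullet> h)\<^sup>2 = 0" "\<forall>j\<in>{..<k}. (b j \<bullet> h)\<^sup>2 = 0"
      using sum_nonneg_eq_0_iff[of "{..<m}" "\<lambda>i. (a i \<bullet> h)\<^sup>2"]
        sum_nonneg_eq_0_iff[of "{..<k}" "\<lambda>j. (b j \<bullet> h)\<^sup>2"] by auto
    then show ?thesis using noint by auto
  qed
  obtain Li M where Li: "linear Li" "\<forall>h. Li (L h) = h" "\<forall>w. L (Li w) = w" "M > 0"
    "\<forall>w. norm (Li w) \<le> M * norm w"
    using lin_inv[OF linL L0] by blast
  define Asum where "Asum = (\<Sum>i<m. norm (a i))"
  define Bsum where "Bsum = (\<Sum>j<k. norm (b j))"
  have AB0: "Asum \<ge> 0" "Bsum \<ge> 0" unfolding Asum_def Bsum_def by (auto intro: sum_nonneg)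
  define C1 where "C1 = Bsum * KG + Asum * KF"
  have C10: "C1 \<ge> 0" unfolding C1_def using AB0 \<rho>KF \<rho>KG by simp
  define \<kappa> where "\<kappa> = 2 * M * C1 + 1"
  have \<kappa>1: "\<kappa> \<ge> 1" unfolding \<kappa>_def using C10 Li(4) by simp
  define Cu where "Cu = 3 * KG * Bsum + KF * Asum"
  have Cu0: "Cu \<ge> 0" unfolding Cu_def using AB0 \<rho>KF \<rho>KG by simp
  obtain \<eta> where \<eta>: "\<eta> > 0" "\<forall>a'. (\<forall>i<m. norm (a' i - a i) \<le> \<eta>) \<longrightarrow> (\<forall>c::nat\<Rightarrow>real. \<exists>v. \<forall>i<m. a' i \<bullet> v = c i)"
    using surj_perturb[OF surjA] by blast
  obtain \<delta>F where \<delta>F: "\<delta>F > 0" "ball z \<delta>F \<subseteq> UF" using F1(4,5) open_contains_ball by blast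
  obtain \<delta>G where \<delta>G: "\<delta>G > 0" "ball z \<delta>G \<subseteq> UG" using G1(4,5) open_contains_ball by blast
  define \<rho> where "\<rho> = min (min (min \<rho>F \<rho>G) (min \<delta>F \<delta>G)) (min (1 / (2 * \<kappa>)) (min (\<eta> / (KF + 1)) (1 / (2 * (M * Cu + 1)))))"
  have p1: "1 / (2 * \<kappa>) > 0" using \<kappa>1 by simp
  have p2: "\<eta> / (KF + 1) > 0" using \<eta>(1) \<rho>KF(2) by simp
  have MCu: "M * Cu \<ge> 0" using Li(4) Cu0 by simp
  have p3: "1 / (2 * (M * Cu + 1)) > 0" using MCu by simp
  have \<rho>0: "\<rho> > 0" unfolding \<rho>_def using \<rho>KF(1) \<rho>KG(1) \<delta>F(1) \<delta>G(1) p1 p2 p3 by (simp only: min_less_iff_conj)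
  have \<rho>b: "\<rho> \<le> \<rho>F" "\<rho> \<le> \<rho>G" "\<rho> \<le> \<delta>F" "\<rho> \<le> \<delta>G" unfolding \<rho>_def by (meson min.cobounded1 min.cobounded2 order_trans)+
  have \<rho>\<kappa>: "\<kappa> * \<rho> \<le> 1/2"
  proof -
    have "\<rho> \<le> 1 / (2 * \<kappa>)" unfolding \<rho>_def by (meson min.cobounded1 min.cobounded2 order_trans)+
    then show ?thesis using \<kappa>1 by (simp add: pos_le_divide_eq mult_ac)
  qed
  have \<rho>\<eta>: "KF * \<rho> \<le> \<eta>"
  proof -
    have "\<rho> \<le> \<eta> / (KF + 1)" unfolding \<rho>_def by (meson min.cobounded1 min.cobounded2 order_trans)+
    then have "\<rho> * (KF + 1) \<le> \<eta>" using \<rho>KF(2) by (simp add: pos_le_divide_eq)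
    then show ?thesis using \<rho>0 by (simp add: algebra_simps)
  qed
  have \<rho>M: "M * Cu * \<rho> \<le> 1/2"
  proof -
    have "\<rho> \<le> 1 / (2 * (M * Cu + 1))" unfolding \<rho>_def by (meson min.cobounded1 min.cobounded2 order_trans)+
    moreover have "2 * (M * Cu + 1) > 0" using MCu by simp
    ultimately have "\<rho> * (2 * (M * Cu + 1)) \<le> 1" by (simp add: pos_le_divide_eq)
    then show ?thesis using \<rho>0 by (simp add: algebra_simps)
  qed
  define W where "W = ball z \<rho>"
  have Wsub: "y \<in> UF" "y \<in> UG" "y \<in> cball z \<rho>F" "y \<in> cball z \<rho>G" "norm (y - z) < \<rho>" if "y \<in> W" for y
    using that \<rho>b \<delta>F(2) \<delta>G(2) by (auto simp: W_def dist_norm norm_minus_commute)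
  have TF: "\<bar>F i y - F i x - gF i x \<bullet> (y - x)\<bar> \<le> KF * (norm (y - x))\<^sup>2" "norm (gF i x - a i) \<le> KF * norm (x - z)"
    if "i < m" "x \<in> W" "y \<in> W" for i x y
    using \<rho>KF(3) that Wsub[OF that(2)] Wsub[OF that(3)] \<rho>KF(1)
    by (auto simp: a_def norm_minus_commute)
  have TG: "\<bar>G i y - G i x - gG i x \<bullet> (y - x)\<bar> \<le> KG * (norm (y - x))\<^sup>2" "norm (gG i x - b i) \<le> KG * norm (x - z)"
    if "i < k" "x \<in> W" "y \<in> W" for i x y
    using \<rho>KG(3) that Wsub[OF that(2)] Wsub[OF that(3)] \<rho>KG(1)
    by (auto simp: b_def norm_minus_commute)
  have zW: "z \<in> W" using \<rho>0 by (simp add: W_def)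

  have tanx: "tangent_space X x = {v. \<forall>i<m. gF i x \<bullet> v = 0}" if x: "x \<in> X" "x \<in> W" for x
  proof -
    have "\<forall>i<m. norm (gF i x - a i) \<le> \<eta>"
    proof (intro allI impI)
      fix i assume "i < m"
      then have "norm (gF i x - a i) \<le> KF * norm (x - z)" using TF(2) x zW by blast
      also have "\<dots> \<le> KF * \<rho>" using Wsub(5)[OF x(2)] \<rho>KF(2) by (intro mult_left_mono) auto
      finally show "norm (gF i x - a i) \<le> \<eta>" using \<rho>\<eta> by linarith
    qed
    then have sx: "\<forall>c::nat\<Rightarrow>real. \<exists>v. \<forall>i<m. gF i x \<bullet> v = c i"
      using \<eta>(2)[rule_format, of "\<lambda>i. gF i x"] by blast
    have "\<forall>c::nat\<Rightarrow>real. \<exists>v. \<forall>i<m. frechet_derivative (F i) (at x) v = c i" using sx fdF by simp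
    then have "local_defining_map X x m F"
      unfolding local_defining_map_def using F1(1,3,4,6) Wsub(1)[OF x(2)] by blast
    then show ?thesis using tangent_eq[of X x m F] x(1) fdF by simp
  qed
  define H where "H x y = (\<Sum>j<k. G j y *\<^sub>R b j) + (\<Sum>i<m. (gF i x \<bullet> (y - x)) *\<^sub>R a i)" for x y
  have Hequiv: "(y \<in> Y \<inter> W \<and> y \<in> {x + v | v. v \<in> tangent_space X x}) \<longleftrightarrow> (y \<in> W \<and> H x y = 0)"
    if x: "x \<in> X" "x \<in> W" for x y
  proof
    assume h: "y \<in> Y \<inter> W \<and> y \<in> {x + v | v. v \<in> tangent_space X x}"
    then obtain v where v: "y = x + v" "v \<in> tangent_space X x" by blast
    then have "\<forall>i<m. gF i x \<bullet> (y - x) = 0" using tanx[OF x] by simp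
    moreover have "\<forall>j<k. G j y = 0" using h G1(6) Wsub(2) by blast
    ultimately show "y \<in> W \<and> H x y = 0" using h by (simp add: H_def)
  next
    assume h: "y \<in> W \<and> H x y = 0"
    then have "(\<Sum>i<m. (gF i x \<bullet> (y - x)) *\<^sub>R a i) + (\<Sum>j<k. G j y *\<^sub>R b j) = 0"
      by (simp add: H_def add.commute)
    then have zz: "(\<forall>i<m. gF i x \<bullet> (y - x) = 0) \<and> (\<forall>j<k. G j y = 0)"
      using ind2[rule_format, of "\<lambda>i. gF i x \<bullet> (y - x)" "\<lambda>j. G j y"] by simp
    then have "y \<in> Y" using G1(3) by blast
    moreover have "y - x \<in> tangent_space X x" using zz tanx[OF x] by simp
    moreover have "y = x + (y - x)" by simp
    ultimately show "y \<in> Y \<inter> W \<and> y \<in> {x + v | v. v \<in> tangent_space X x}" using h by blast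
  qed
  have Hexist: "\<exists>y0. norm (y0 - z) \<le> \<kappa> * (norm (x - z))\<^sup>2 \<and> y0 \<in> W \<and> H x y0 = 0"
    if x: "x \<in> X" "x \<in> W" for x
  proof -
    define d where "d = norm (x - z)"
    define r where "r = \<kappa> * d\<^sup>2"
    have d0: "d \<ge> 0" "d < \<rho>" using Wsub(5)[OF x(2)] by (auto simp: d_def)
    have \<kappa>d: "\<kappa> * d \<le> 1/2"
    proof -
      have "\<kappa> * d \<le> \<kappa> * \<rho>" using d0 \<kappa>1 by (intro mult_left_mono) auto
      then show ?thesis using \<rho>\<kappa> by linarith
    qed
    have r0: "r \<ge> 0" using \<kappa>1 by (simp add: r_def)
    have rd: "r \<le> d / 2"
    proof -
      have "(\<kappa> * d) * d \<le> (1/2) * d" using \<kappa>d d0 by (intro mult_right_mono) auto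
      then show ?thesis by (simp add: r_def power2_eq_square mult.assoc)
    qed
    have cW: "y \<in> W" if "y \<in> cball z r" for y
    proof -
      have "dist z y \<le> r" using that by simp
      then have "dist z y < \<rho>" using rd d0 by linarith
      then show ?thesis by (simp add: W_def)
    qed
    have cont: "continuous_on (cball z r) (H x)"
      unfolding H_def
      by (intro continuous_on_add continuous_on_sum continuous_on_scaleR continuous_on_inner
          continuous_on_const continuous_on_diff continuous_on_id
          continuous_on_subset[OF contG[rule_format] subset_UNIV]) auto
    have bd: "\<forall>y\<in>cball z r. M * norm (L (y - z) - H x y) \<le> r"
    proof
      fix y assume y: "y \<in> cball z r"
      have yW: "y \<in> W" using cW y .
      have nyz: "norm (y - z) \<le> r" using y by (simp add: dist_norm norm_minus_commute)
      have eq: "L (y - z) - H x y = (\<Sum>j<k. (b j \<bullet> (y - z) - G j y) *\<^sub>R b j) + (\<Sum>i<m. (a i \<bullet> (y - z) - gF i x \<bullet> (y - x)) *\<^sub>R a i)"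
        by (simp add: L_def H_def scaleR_diff_left sum_subtractf sum.distrib algebra_simps)
      have bj: "\<bar>b j \<bullet> (y - z) - G j y\<bar> \<le> KG * r\<^sup>2" if j: "j < k" for j
      proof -
        have "\<bar>G j y - G j z - gG j z \<bullet> (y - z)\<bar> \<le> KG * (norm (y - z))\<^sup>2" using TG(1)[OF j zW yW] .
        also have "\<dots> \<le> KG * r\<^sup>2" using nyz \<rho>KG(2) by (intro mult_left_mono power_mono) auto
        finally have c: "\<bar>G j y - G j z - gG j z \<bullet> (y - z)\<bar> \<le> KG * r\<^sup>2" .
        have "G j z = 0" using zGz j by blast
        then show ?thesis using c unfolding b_def by (smt (verit))
      qed
      have ai: "\<bar>a i \<bullet> (y - z) - gF i x \<bullet> (y - x)\<bar> \<le> KF * (d * r + d\<^sup>2)" if i: "i < m" for i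
      proof -
        have t1: "\<bar>F i z - F i x - gF i x \<bullet> (z - x)\<bar> \<le> KF * d\<^sup>2"
          using TF(1)[OF i x(2) zW] by (simp add: d_def norm_minus_commute)
        have "F i z = 0" "F i x = 0" using zFz i F1(6) Wsub(1)[OF x(2)] x(1) by blast+
        then have t1': "\<bar>gF i x \<bullet> (z - x)\<bar> \<le> KF * d\<^sup>2" using t1 by simp
        have "\<bar>(a i - gF i x) \<bullet> (y - z)\<bar> \<le> norm (a i - gF i x) * norm (y - z)"
          by (rule Cauchy_Schwarz_ineq2)
        also have "\<dots> \<le> (KF * d) * r"
        proof (rule mult_mono)
          show "norm (a i - gF i x) \<le> KF * d" using TF(2)[OF i x(2) zW] by (simp add: d_def norm_minus_commute)
        qed (use nyz \<rho>KF(2) d0 in auto)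
        finally have t2: "\<bar>(a i - gF i x) \<bullet> (y - z)\<bar> \<le> KF * d * r" .
        have "a i \<bullet> (y - z) - gF i x \<bullet> (y - x) = (a i - gF i x) \<bullet> (y - z) - gF i x \<bullet> (z - x)"
          by (simp add: inner_diff_left inner_diff_right algebra_simps)
        then have "\<bar>a i \<bullet> (y - z) - gF i x \<bullet> (y - x)\<bar> \<le> KF * d * r + KF * d\<^sup>2" using t1' t2 by linarith
        then show ?thesis by (simp add: algebra_simps)
      qed
      have "norm (L (y - z) - H x y) \<le> (KG * r\<^sup>2) * Bsum + (KF * (d * r + d\<^sup>2)) * Asum"
        unfolding eq Asum_def Bsum_def
        using sum_norm_bound[of k "\<lambda>j. b j \<bullet> (y - z) - G j y" "KG * r\<^sup>2" b, OF bj]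
          sum_norm_bound[of m "\<lambda>i. a i \<bullet> (y - z) - gF i x \<bullet> (y - x)" "KF * (d * r + d\<^sup>2)" a, OF ai]
        by (smt (verit) norm_triangle_ineq)
      also have "\<dots> \<le> C1 * (r\<^sup>2 + d * r + d\<^sup>2)"
      proof -
        have "0 \<le> Bsum * KG * (d * r + d\<^sup>2)" "0 \<le> Asum * KF * r\<^sup>2"
          using AB0 \<rho>KF(2) \<rho>KG(2) d0 r0 by simp_all
        then show ?thesis by (simp add: C1_def algebra_simps)
      qed
      also have "\<dots> \<le> C1 * (2 * d\<^sup>2)"
      proof -
        have e1: "r\<^sup>2 \<le> d\<^sup>2 / 4" using power_mono[of r "d/2" 2] rd r0 by (simp add: power_divide)
        have e2: "d * r \<le> d\<^sup>2 / 2" using mult_left_mono[OF rd d0(1)] by (simp add: power2_eq_square)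
        have "d\<^sup>2 \<ge> 0" by simp
        then have "r\<^sup>2 + d * r + d\<^sup>2 \<le> 2 * d\<^sup>2" using e1 e2 by linarith
        then show ?thesis using C10 by (intro mult_left_mono) auto
      qed
      finally have "M * norm (L (y - z) - H x y) \<le> M * (C1 * (2 * d\<^sup>2))" using Li(4) by (intro mult_left_mono) auto
      also have "\<dots> \<le> \<kappa> * d\<^sup>2" by (simp add: \<kappa>_def algebra_simps)
      finally show "M * norm (L (y - z) - H x y) \<le> r" by (simp add: r_def)
    qed
    obtain y0 where y0: "y0 \<in> cball z r" "H x y0 = 0"
      using brouwer_solve[OF Li(1) Li(3) Li(2) linL Li(5) cont r0 bd] by blast
    have "norm (y0 - z) \<le> \<kappa> * (norm (x - z))\<^sup>2" using y0(1) by (simp add: r_def d_def dist_norm norm_minus_commute)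
    then show ?thesis using y0 cW by blast
  qed
  have Huniq: "y1 = y2" if hx: "x \<in> W" "y1 \<in> W" "y2 \<in> W" "H x y1 = 0" "H x y2 = 0" for x y1 y2
  proof -
    define n where "n = norm (y1 - y2)"
    have n2: "n \<le> 2 * \<rho>"
    proof -
      have "n \<le> norm (y1 - z) + norm (y2 - z)" unfolding n_def
        using norm_triangle_ineq4[of "y1 - z" "y2 - z"] by simp
      then show ?thesis using Wsub(5)[OF hx(2)] Wsub(5)[OF hx(3)] by linarith
    qed
    have Hd: "H x y1 - H x y2 = (\<Sum>j<k. (G j y1 - G j y2) *\<^sub>R b j) + (\<Sum>i<m. (gF i x \<bullet> (y1 - y2)) *\<^sub>R a i)"
      by (simp add: H_def scaleR_diff_left sum_subtractf inner_diff_right algebra_simps)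
    have "L (y1 - y2) = L (y1 - y2) - (H x y1 - H x y2)" using hx by simp
    also have "\<dots> = (\<Sum>j<k. (b j \<bullet> (y1 - y2) - (G j y1 - G j y2)) *\<^sub>R b j) + (\<Sum>i<m. ((a i - gF i x) \<bullet> (y1 - y2)) *\<^sub>R a i)"
      unfolding Hd by (simp add: L_def scaleR_diff_left sum_subtractf sum.distrib inner_diff_left algebra_simps)
    finally have eq: "L (y1 - y2) = (\<Sum>j<k. (b j \<bullet> (y1 - y2) - (G j y1 - G j y2)) *\<^sub>R b j) + (\<Sum>i<m. ((a i - gF i x) \<bullet> (y1 - y2)) *\<^sub>R a i)" .
    have bj: "\<bar>b j \<bullet> (y1 - y2) - (G j y1 - G j y2)\<bar> \<le> 3 * KG * \<rho> * n" if j: "j < k" for j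
    proof -
      have t1: "\<bar>G j y1 - G j y2 - gG j y2 \<bullet> (y1 - y2)\<bar> \<le> KG * n\<^sup>2"
        using TG(1)[OF j hx(3) hx(2)] by (simp add: n_def)
      have "\<bar>(gG j y2 - b j) \<bullet> (y1 - y2)\<bar> \<le> norm (gG j y2 - b j) * n"
        unfolding n_def by (rule Cauchy_Schwarz_ineq2)
      also have "\<dots> \<le> (KG * \<rho>) * n"
      proof (rule mult_right_mono)
        have "norm (gG j y2 - b j) \<le> KG * norm (y2 - z)" using TG(2)[OF j hx(3) hx(3)] .
        also have "\<dots> \<le> KG * \<rho>" using Wsub(5)[OF hx(3)] \<rho>KG(2) by (intro mult_left_mono) auto
        finally show "norm (gG j y2 - b j) \<le> KG * \<rho>" .
      qed (simp add: n_def)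
      finally have t2: "\<bar>(gG j y2 - b j) \<bullet> (y1 - y2)\<bar> \<le> KG * \<rho> * n" .
      have "KG * n\<^sup>2 = (KG * n) * n" by (simp add: power2_eq_square)
      also have "\<dots> \<le> (KG * (2 * \<rho>)) * n" using n2 \<rho>KG(2) by (intro mult_right_mono mult_left_mono) (auto simp: n_def)
      finally have t3: "KG * n\<^sup>2 \<le> 2 * KG * \<rho> * n" by (simp add: algebra_simps)
      have "b j \<bullet> (y1 - y2) - (G j y1 - G j y2) = - (G j y1 - G j y2 - gG j y2 \<bullet> (y1 - y2)) - (gG j y2 - b j) \<bullet> (y1 - y2)"
        by (simp add: inner_diff_left algebra_simps)
      moreover have tri: "\<bar>- p - q\<bar> \<le> \<bar>p\<bar> + \<bar>q\<bar>" for p q :: real by (smt (verit))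
      ultimately have "\<bar>b j \<bullet> (y1 - y2) - (G j y1 - G j y2)\<bar> \<le> \<bar>G j y1 - G j y2 - gG j y2 \<bullet> (y1 - y2)\<bar> + \<bar>(gG j y2 - b j) \<bullet> (y1 - y2)\<bar>"
        by simp
      then show ?thesis using t1 t2 t3 by linarith
    qed
    have ai: "\<bar>(a i - gF i x) \<bullet> (y1 - y2)\<bar> \<le> KF * \<rho> * n" if i: "i < m" for i
    proof -
      have "\<bar>(a i - gF i x) \<bullet> (y1 - y2)\<bar> \<le> norm (a i - gF i x) * n"
        unfolding n_def by (rule Cauchy_Schwarz_ineq2)
      also have "\<dots> \<le> (KF * \<rho>) * n"
      proof (rule mult_right_mono)
        have "norm (a i - gF i x) \<le> KF * norm (x - z)" using TF(2)[OF i hx(1) hx(1)] by (simp add: norm_minus_commute)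
        also have "\<dots> \<le> KF * \<rho>" using Wsub(5)[OF hx(1)] \<rho>KF(2) by (intro mult_left_mono) auto
        finally show "norm (a i - gF i x) \<le> KF * \<rho>" .
      qed (simp add: n_def)
      finally show ?thesis .
    qed
    have "norm (L (y1 - y2)) \<le> (3 * KG * \<rho> * n) * Bsum + (KF * \<rho> * n) * Asum"
      unfolding eq Asum_def Bsum_def
      using sum_norm_bound[of k "\<lambda>j. b j \<bullet> (y1 - y2) - (G j y1 - G j y2)" "3 * KG * \<rho> * n" b, OF bj]
        sum_norm_bound[of m "\<lambda>i. (a i - gF i x) \<bullet> (y1 - y2)" "KF * \<rho> * n" a, OF ai]
      by (smt (verit) norm_triangle_ineq)
    also have "\<dots> = Cu * \<rho> * n" by (simp add: Cu_def algebra_simps)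
    finally have nL: "norm (L (y1 - y2)) \<le> Cu * \<rho> * n" .
    have "n = norm (Li (L (y1 - y2)))" using Li(2) by (simp add: n_def)
    also have "\<dots> \<le> M * norm (L (y1 - y2))" using Li(5) by blast
    also have "\<dots> \<le> M * (Cu * \<rho> * n)" using nL Li(4) by (intro mult_left_mono) auto
    also have "\<dots> = (M * Cu * \<rho>) * n" by (simp add: algebra_simps)
    also have "\<dots> \<le> (1/2) * n" using \<rho>M by (intro mult_right_mono) (auto simp: n_def)
    finally have "n \<le> 0" by simp
    then show ?thesis by (simp add: n_def)
  qed
  show ?thesis
  proof (intro exI[of _ W] conjI)
    show "open W" by (simp add: W_def)
    show "z \<in> W" by (rule zW)
    show "\<forall>x\<in>X \<inter> W. \<exists>!y. y \<in> Y \<inter> W \<and> y \<in> {x + v |v. v \<in> tangent_space X x}"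
    proof
      fix x assume x: "x \<in> X \<inter> W"
      obtain y0 where y0: "norm (y0 - z) \<le> \<kappa> * (norm (x - z))\<^sup>2" "y0 \<in> W" "H x y0 = 0"
        using Hexist x by blast
      show "\<exists>!y. y \<in> Y \<inter> W \<and> y \<in> {x + v |v. v \<in> tangent_space X x}"
      proof (rule ex1I[of _ y0])
        show "y0 \<in> Y \<inter> W \<and> y0 \<in> {x + v |v. v \<in> tangent_space X x}"
          using Hequiv[of x y0] x y0 by blast
      next
        fix y assume "y \<in> Y \<inter> W \<and> y \<in> {x + v |v. v \<in> tangent_space X x}"
        then have "y \<in> W" "H x y = 0" using Hequiv[of x y] x by blast+
        then show "y = y0" using Huniq[of x y y0] x y0 by blast
      qed
    qed
    show "\<exists>C \<delta>. \<delta> > 0 \<and> (\<forall>x y. x \<in> X \<inter> W \<and> y \<in> Y \<inter> W \<and>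
                 y \<in> {x + v | v. v \<in> tangent_space X x} \<and> norm (x - z) < \<delta> \<longrightarrow>
                 norm (y - z) \<le> C * (norm (x - z))\<^sup>2)"
    proof -
     have "\<forall>x y. x \<in> X \<inter> W \<and> y \<in> Y \<inter> W \<and>
                 y \<in> {x + v | v. v \<in> tangent_space X x} \<and> norm (x - z) < \<rho> \<longrightarrow>
                 norm (y - z) \<le> \<kappa> * (norm (x - z))\<^sup>2"
     proof (intro allI impI)
      fix x y assume h: "x \<in> X \<inter> W \<and> y \<in> Y \<inter> W \<and> y \<in> {x + v | v. v \<in> tangent_space X x} \<and> norm (x - z) < \<rho>"
      obtain y0 where y0: "norm (y0 - z) \<le> \<kappa> * (norm (x - z))\<^sup>2" "y0 \<in> W" "H x y0 = 0"
        using Hexist h by blast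
      have "y \<in> W" "H x y = 0" using Hequiv[of x y] h by blast+
      then have "y = y0" using Huniq[of x y y0] h y0 by blast
      then show "norm (y - z) \<le> \<kappa> * (norm (x - z))\<^sup>2" using y0 by simp
    qed
     then show ?thesis using \<rho>0 by blast
    qed
  qed
qed

end
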